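(* Let $X$ have the standard Cauchy distribution, with distribution function $F(x)=\frac1\pi\arctan(x)+\frac12$, $x\in\mathbb{R}$, and let $\phi:\mathbb{R}\to\mathbb{R}$ be an arbitrary convex function (not necessarily monotone). Then $\phi(X)\in\mathcal{D}^-$.
   Context: For real random variables, $X \le_{st} Y$ means $P(X\le t)\ge P(Y\le t)$ for all $t\in\mathbb{R}$. A real random variable $X$ (equivalently its distribution function $F_X$) belongs to $\mathcal{D}^-$ if for every $n\in\mathbb{N}$, all $\theta_1,\dots,\theta_n\ge 0$ with $\sum_{i=1}^n\theta_i=1$, and i.i.d. random variables $X_1,\dots,X_n$ with distribution $F_X$, we have $X_1\le_{st}\sum_{i=1}^n\theta_iX_i$. *)

theory Defs
  imports "HOL-Probability.Probability"
begin

definition st_le :: "real measure \<Rightarrow> real measure \<Rightarrow> bool" where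
  "st_le M N \<longleftrightarrow> (\<forall>t::real. measure M {..t} \<ge> measure N {..t})"

text \<open>The class D^- of distributions on the reals. For i.i.d. X_1,...,X_n with law mu,
  the joint law is the product measure, and the law of sum theta_i X_i is its image.\<close>
definition D_minus :: "real measure \<Rightarrow> bool" where
  "D_minus mu \<longleftrightarrow> prob_space mu \<and> sets mu = sets borel \<and>
     (\<forall>n::nat. \<forall>\<theta>::nat \<Rightarrow> real.
        (\<forall>i<n. 0 \<le> \<theta> i) \<and> (\<Sum>i<n. \<theta> i) = 1 \<longrightarrow>
        st_le mu (distr (PiM {..<n} (\<lambda>_. mu)) borel (\<lambda>x. \<Sum>i<n. \<theta> i * x i)))"

definition std_cauchy :: "real measure" where
  "std_cauchy = density lborel (\<lambda>x. ennreal (1 / (pi * (1 + x\<^sup>2))))"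

end

theory Submission
  imports Defs "HOL-Real_Asymp.Real_Asymp"
begin


lemma nn_integral_FTC_real:
  fixes f F :: "real \<Rightarrow> real"
  assumes [measurable]: "f \<in> borel_measurable borel"
  and nn: "\<And>x. 0 \<le> f x" and D: "\<And>x. (F has_real_derivative f x) (at x)"
  and L: "(F \<longlongrightarrow> L) at_bot" and U: "(F \<longlongrightarrow> U) at_top"
  shows "(\<integral>\<^sup>+x. ennreal (f x) \<partial>lborel) = ennreal (U - L)"
proof -
  define g where "g n x = ennreal (f x) * indicator {- real n..} x" for n::nat and x
  have inc: "incseq g"
    unfolding incseq_def le_fun_def g_def
    by (auto intro!: mult_left_mono split: split_indicator)
  have lim1: "(\<lambda>n. integral\<^sup>N lborel (g n)) \<longlonglongrightarrow> integral\<^sup>N lborel (\<lambda>x. ennreal (f x))"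
  proof (rule nn_integral_LIMSEQ[OF inc])
    show "g i \<in> borel_measurable lborel" for i unfolding g_def by measurable
    fix x
    obtain m::nat where m: "- x \<le> real m" using real_arch_simple by blast
    have "eventually (\<lambda>n. g n x = ennreal (f x)) sequentially"
      using m by (intro eventually_sequentiallyI[of m]) (auto simp: g_def split: split_indicator)
    then show "(\<lambda>n. g n x) \<longlonglongrightarrow> ennreal (f x)" by (rule tendsto_eventually)
  qed
  have eq: "integral\<^sup>N lborel (g n) = ennreal (U - F (- real n))" for n
    unfolding g_def by (rule nn_integral_FTC_atLeast) (use D nn U in auto)
  have "filterlim (\<lambda>n::nat. - real n) at_bot sequentially"
    by (simp add: filterlim_uminus_at_bot filterlim_real_sequentially)
  then have "(\<lambda>n::nat. F (- real n)) \<longlonglongrightarrow> L"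
    using L by (rule filterlim_compose[rotated])
  then have lim2: "(\<lambda>n. integral\<^sup>N lborel (g n)) \<longlonglongrightarrow> ennreal (U - L)"
    unfolding eq by (intro tendsto_ennrealI tendsto_diff tendsto_const)
  show ?thesis using LIMSEQ_unique[OF lim1 lim2] .
qed



definition cd :: "real \<Rightarrow> real \<Rightarrow> real" where
  "cd s x = s / (pi * (s\<^sup>2 + x\<^sup>2))"

lemma cd_nonneg: "0 \<le> s \<Longrightarrow> 0 \<le> cd s x"
  unfolding cd_def by (auto intro!: divide_nonneg_pos add_nonneg_nonneg)

lemma cd_total: assumes "s > 0" shows "(\<integral>\<^sup>+x. ennreal (cd s x) \<partial>lborel) = 1"
proof -
  have "(\<integral>\<^sup>+x. ennreal (cd s x) \<partial>lborel) = ennreal (1/2 - (-1/2))"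
  proof (rule nn_integral_FTC_real[where F="\<lambda>x. arctan (x/s) / pi"])
    show "cd s \<in> borel_measurable borel" unfolding cd_def by measurable
    show "0 \<le> cd s x" for x using assms by (simp add: cd_nonneg)
    show "((\<lambda>x. arctan (x/s) / pi) has_real_derivative cd s x) (at x)" for x
    proof -
      have "((\<lambda>x. arctan (x/s) / pi) has_real_derivative (1 / (1 + (x/s)\<^sup>2) * (1/s)) / pi) (at x)"
        using assms by (auto intro!: derivative_eq_intros simp: inverse_eq_divide)
      moreover have "(1 / (1 + (x/s)\<^sup>2) * (1/s)) / pi = cd s x"
        using assms unfolding cd_def by (simp add: field_simps power2_eq_square)
      ultimately show ?thesis by simp
    qed
    show "((\<lambda>x. arctan (x/s) / pi) \<longlongrightarrow> -1/2) at_bot" using assms by real_asymp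
    show "((\<lambda>x. arctan (x/s) / pi) \<longlongrightarrow> 1/2) at_top" using assms by real_asymp
  qed
  then show ?thesis by simp
qed

lemma cd_conv:
  assumes a: "a > 0" and b: "b > 0" and z: "z \<noteq> 0"
  shows "(\<integral>\<^sup>+y. ennreal (cd a (z - y) * cd b y) \<partial>lborel) = ennreal (cd (a+b) z)"
proof -
  define N where "N = ((a+b)^2+z^2)*((a-b)^2+z^2)"
  define c1 where "c1 = a^2-b^2+z^2"
  define c2 where "c2 = b^2-a^2+z^2"
  have Npos: "N > 0" unfolding N_def using z by (intro mult_pos_pos) (auto intro: add_nonneg_pos)
  define G where "G y = (z*ln(b^2+y^2) + c1/b*arctan(y/b) - z*ln(a^2+(y-z)^2) + c2/a*arctan((y-z)/a))/N" for y
  define F where "F y = a*b/pi^2 * G y" for y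
  have Bpos: "b^2+y^2 > 0" for y using b by (simp add: add_pos_nonneg)
  have Apos: "a^2+(y-z)^2 > 0" for y using a by (simp add: add_pos_nonneg)
  have pf: "1/((a^2+(y-z)^2)*(b^2+y^2)) = (2*z*y + c1)/(N*(b^2+y^2)) + (-2*z*(y-z) + c2)/(N*(a^2+(y-z)^2))" for y
  proof -
    have "N = (2*z*y + c1)*(a^2+(y-z)^2) + (-2*z*(y-z) + c2)*(b^2+y^2)"
      unfolding N_def c1_def c2_def by algebra
    moreover have "(2*z*y + c1)/(N*(b^2+y^2)) + (-2*z*(y-z) + c2)/(N*(a^2+(y-z)^2)) = ((2*z*y + c1)*(a^2+(y-z)^2) + (-2*z*(y-z) + c2)*(b^2+y^2))/(N*(a^2+(y-z)^2)*(b^2+y^2))"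
    proof -
      have gen: "\<And>p q P Q N::real. N\<noteq>0 \<Longrightarrow> P\<noteq>0 \<Longrightarrow> Q\<noteq>0 \<Longrightarrow> p/(N*Q) + q/(N*P) = (p*P+q*Q)/(N*P*Q)"
        by (simp add: field_simps)
      show ?thesis using Npos Apos[of y] Bpos[of y] by (intro gen) auto
    qed
    ultimately show ?thesis using Npos Apos[of y] Bpos[of y] by simp
  qed
  have "(\<integral>\<^sup>+y. ennreal (cd a (z - y) * cd b y) \<partial>lborel) = ennreal (a*b/pi^2 * (pi*(c1/b+c2/a)/N/2) - a*b/pi^2 * (-(pi*(c1/b+c2/a)/N/2)))"
  proof (rule nn_integral_FTC_real[where F=F])
    show "(\<lambda>y. cd a (z - y) * cd b y) \<in> borel_measurable borel" unfolding cd_def by measurable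
    show "0 \<le> cd a (z - y) * cd b y" for y using a b by (simp add: cd_nonneg)
    show "(F has_real_derivative cd a (z - y) * cd b y) (at y)" for y
    proof -
      have d1: "((\<lambda>y. arctan(y/b)) has_real_derivative b/(b^2+y^2)) (at y)"
      proof -
        have "((\<lambda>y. arctan(y/b)) has_real_derivative inverse (1 + (y/b)^2) * (1/b)) (at y)"
          using b by (auto intro!: derivative_eq_intros)
        moreover have "inverse (1 + (y/b)^2) * (1/b) = b/(b^2+y^2)"
          using b by (simp add: field_simps power2_eq_square)
        ultimately show ?thesis by simp
      qed
      have d2: "((\<lambda>y. arctan((y-z)/a)) has_real_derivative a/(a^2+(y-z)^2)) (at y)"
      proof -
        have "((\<lambda>y. arctan((y-z)/a)) has_real_derivative inverse (1 + ((y-z)/a)^2) * ((1-0)/a)) (at y)"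
          using a by (auto intro!: derivative_eq_intros)
        moreover have "inverse (1 + ((y-z)/a)^2) * ((1-0)/a) = a/(a^2+(y-z)^2)"
          using a by (simp add: field_simps power2_eq_square)
        ultimately show ?thesis by simp
      qed
      have d3: "((\<lambda>y. ln(b^2+y^2)) has_real_derivative 2*y/(b^2+y^2)) (at y)"
        using Bpos[of y] by (auto intro!: derivative_eq_intros simp: power2_eq_square)
      have d4: "((\<lambda>y. ln(a^2+(y-z)^2)) has_real_derivative 2*(y-z)/(a^2+(y-z)^2)) (at y)"
        using Apos[of y] by (auto intro!: derivative_eq_intros simp: power2_eq_square)
      have "(F has_real_derivative a*b/pi^2 * ((z*(2*y/(b^2+y^2)) + c1/b*(b/(b^2+y^2)) - z*(2*(y-z)/(a^2+(y-z)^2)) + c2/a*(a/(a^2+(y-z)^2)))/N)) (at y)"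
        unfolding F_def G_def
        by (intro DERIV_cmult DERIV_cdivide DERIV_add DERIV_diff d1 d2 d3 d4)
      moreover have "a*b/pi^2 * ((z*(2*y/(b^2+y^2)) + c1/b*(b/(b^2+y^2)) - z*(2*(y-z)/(a^2+(y-z)^2)) + c2/a*(a/(a^2+(y-z)^2)))/N) = cd a (z - y) * cd b y"
      proof -
        have e1: "c1/b*(b/(b^2+y^2)) = c1/(b^2+y^2)" using b by simp
        have e2: "c2/a*(a/(a^2+(y-z)^2)) = c2/(a^2+(y-z)^2)" using a by simp
        have e3: "cd a (z - y) * cd b y = a*b/pi^2 * (1/((a^2+(y-z)^2)*(b^2+y^2)))"
          unfolding cd_def by (simp add: field_simps power2_eq_square)
        have e4: "z*(2*y/(b^2+y^2)) + c1/(b^2+y^2) - z*(2*(y-z)/(a^2+(y-z)^2)) + c2/(a^2+(y-z)^2)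
            = (2*z*y + c1)/(b^2+y^2) + (-2*z*(y-z) + c2)/(a^2+(y-z)^2)"
        proof -
          have gen: "\<And>P Q::real. P \<noteq> 0 \<Longrightarrow> Q \<noteq> 0 \<Longrightarrow> z*(2*y/Q) + c1/Q - z*(2*(y-z)/P) + c2/P = (2*z*y + c1)/Q + (-2*z*(y-z) + c2)/P"
            by (simp add: field_simps)
          show ?thesis using Apos[of y] Bpos[of y] by (intro gen) auto
        qed
        show ?thesis unfolding e1 e2 e3 pf e4 using Npos
          by (simp add: add_divide_distrib mult.commute)
      qed
      ultimately show ?thesis by simp
    qed
    show "(F \<longlongrightarrow> a*b/pi^2 * (-(pi*(c1/b+c2/a)/N/2))) at_bot"
    proof -
      have l1: "((\<lambda>y. ln(b^2+y^2) - ln(a^2+(y-z)^2)) \<longlongrightarrow> 0) at_bot" using a b by real_asymp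
      have l2: "((\<lambda>y. arctan(y/b)) \<longlongrightarrow> -pi/2) at_bot" using b by real_asymp
      have l3: "((\<lambda>y. arctan((y-z)/a)) \<longlongrightarrow> -pi/2) at_bot" using a by real_asymp
      have "((\<lambda>y. a*b/pi^2 * ((z*(ln(b^2+y^2) - ln(a^2+(y-z)^2)) + c1/b*arctan(y/b) + c2/a*arctan((y-z)/a))/N))
          \<longlongrightarrow> a*b/pi^2 * ((z*0 + c1/b*(-pi/2) + c2/a*(-pi/2))/N)) at_bot"
        using Npos by (intro tendsto_intros l1 l2 l3) auto
      moreover have "(\<lambda>y. a*b/pi^2 * ((z*(ln(b^2+y^2) - ln(a^2+(y-z)^2)) + c1/b*arctan(y/b) + c2/a*arctan((y-z)/a))/N)) = F"
        unfolding F_def G_def by (auto simp: algebra_simps)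
      moreover have "a*b/pi^2 * ((z*0 + c1/b*(-pi/2) + c2/a*(-pi/2))/N) = a*b/pi^2 * (-(pi*(c1/b+c2/a)/N/2))"
        using Npos by (simp add: field_simps minus_divide_left[symmetric])
      ultimately show ?thesis by simp
    qed
    show "(F \<longlongrightarrow> a*b/pi^2 * (pi*(c1/b+c2/a)/N/2)) at_top"
    proof -
      have l1: "((\<lambda>y. ln(b^2+y^2) - ln(a^2+(y-z)^2)) \<longlongrightarrow> 0) at_top" using a b by real_asymp
      have l2: "((\<lambda>y. arctan(y/b)) \<longlongrightarrow> pi/2) at_top" using b by real_asymp
      have l3: "((\<lambda>y. arctan((y-z)/a)) \<longlongrightarrow> pi/2) at_top" using a by real_asymp
      have "((\<lambda>y. a*b/pi^2 * ((z*(ln(b^2+y^2) - ln(a^2+(y-z)^2)) + c1/b*arctan(y/b) + c2/a*arctan((y-z)/a))/N))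
          \<longlongrightarrow> a*b/pi^2 * ((z*0 + c1/b*(pi/2) + c2/a*(pi/2))/N)) at_top"
        using Npos by (intro tendsto_intros l1 l2 l3) auto
      moreover have "(\<lambda>y. a*b/pi^2 * ((z*(ln(b^2+y^2) - ln(a^2+(y-z)^2)) + c1/b*arctan(y/b) + c2/a*arctan((y-z)/a))/N)) = F"
        unfolding F_def G_def by (auto simp: algebra_simps)
      moreover have "a*b/pi^2 * ((z*0 + c1/b*(pi/2) + c2/a*(pi/2))/N) = a*b/pi^2 * (pi*(c1/b+c2/a)/N/2)"
        using Npos by (simp add: field_simps)
      ultimately show ?thesis by simp
    qed
  qed
  also have "a*b/pi^2 * (pi*(c1/b+c2/a)/N/2) - a*b/pi^2 * (-(pi*(c1/b+c2/a)/N/2)) = cd (a+b) z"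
  proof -
    have h: "a*c1 + b*c2 = (a+b)*((a-b)^2+z^2)" unfolding c1_def c2_def by algebra
    define M where "M = (a-b)^2+z^2"
    define P where "P = (a+b)^2+z^2"
    have Mpos: "M > 0" unfolding M_def using z by (simp add: add_nonneg_pos)
    have Ppos: "P > 0" unfolding P_def using z by (simp add: add_nonneg_pos)
    have NPM: "N = P*M" unfolding N_def P_def M_def ..
    have "a*b/pi^2 * (pi*(c1/b+c2/a)/N/2) - a*b/pi^2 * (-(pi*(c1/b+c2/a)/N/2)) = (a*c1 + b*c2)/(pi*N)"
      using a b Npos by (simp add: field_simps power2_eq_square)
    also have "\<dots> = (a+b)*M/(pi*(P*M))" unfolding h NPM M_def ..
    also have "\<dots> = (a+b)/(pi*P)" using Mpos by simp
    also have "\<dots> = cd (a+b) z" unfolding cd_def P_def ..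
    finally show ?thesis .
  qed
  finally show ?thesis .
qed



definition K :: "real \<Rightarrow> real measure" where
  "K s = (if s = 0 then return borel 0 else density lborel (\<lambda>x. ennreal (cd s x)))"

lemma sets_K[simp, measurable_cong]: "sets (K s) = sets borel"
  unfolding K_def by auto

lemma space_K[simp]: "space (K s) = UNIV"
  using sets_eq_imp_space_eq[OF sets_K[of s]] by simp

lemma prob_K: assumes "s \<ge> 0" shows "prob_space (K s)"
proof (cases "s = 0")
  case True then show ?thesis unfolding K_def by (simp add: prob_space_return)
next
  case False
  then have s: "s > 0" using assms by simp
  show ?thesis
  proof (rule prob_spaceI)
    have "emeasure (density lborel (\<lambda>x. ennreal (cd s x))) UNIV = (\<integral>\<^sup>+x. ennreal (cd s x) \<partial>lborel)"
      unfolding cd_def by (subst emeasure_density) auto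
    then show "emeasure (K s) (space (K s)) = 1" using cd_total[OF s] False unfolding K_def by simp
  qed
qed

lemma std_cauchy_K1: "std_cauchy = K 1"
  unfolding std_cauchy_def K_def cd_def by simp

lemma distr_scale:
  assumes th: "\<theta> \<ge> 0"
  shows "distr (K 1) borel (\<lambda>x. \<theta> * x) = K \<theta>"
proof (cases "\<theta> = 0")
  case True
  interpret prob_space "K 1" using prob_K[of 1] by simp
  have "K \<theta> = return borel 0" using True by (simp add: K_def)
  moreover have "distr (K 1) borel (\<lambda>x. \<theta> * x) = distr (K 1) borel (\<lambda>x. 0)" using True by simp
  ultimately show ?thesis by simp
next
  case False
  then have t: "\<theta> > 0" using th by simp
  show ?thesis
  proof (rule measure_eqI)
    show "sets (distr (K 1) borel (\<lambda>x. \<theta> * x)) = sets (K \<theta>)" by simp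
    fix A assume "A \<in> sets (distr (K 1) borel (\<lambda>x. \<theta> * x))"
    then have [measurable]: "A \<in> sets borel" by simp
    have pre: "(*) \<theta> -` A \<in> sets borel"
    proof -
      have "(*) \<theta> \<in> borel_measurable borel" by measurable
      from measurable_sets[OF this \<open>A \<in> sets borel\<close>] show ?thesis by simp
    qed
    have "emeasure (distr (K 1) borel (\<lambda>x. \<theta> * x)) A = emeasure (K 1) ((\<lambda>x. \<theta> * x) -` A)"
      by (subst emeasure_distr) auto
    also have "\<dots> = (\<integral>\<^sup>+x. ennreal (cd 1 x) * indicator A (\<theta> * x) \<partial>lborel)"
    proof -
      have k1: "K 1 = density lborel (\<lambda>x. ennreal (cd 1 x))" by (simp add: K_def)
      show ?thesis unfolding k1 using pre by (subst emeasure_density) (auto simp: cd_def intro!: nn_integral_cong split: split_indicator)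
    qed
    also have "\<dots> = (\<integral>\<^sup>+x. ennreal \<theta> * (ennreal (cd \<theta> (0 + \<theta> * x)) * indicator A (0 + \<theta> * x)) \<partial>lborel)"
    proof (intro nn_integral_cong)
      fix x
      have d: "pi * (\<theta>\<^sup>2 + (\<theta> * x)\<^sup>2) = (\<theta>*\<theta>) * (pi * (1\<^sup>2 + x\<^sup>2))"
        by (simp add: algebra_simps power2_eq_square)
      have "\<theta> * cd \<theta> (\<theta> * x) = (\<theta>*\<theta>) / ((\<theta>*\<theta>) * (pi * (1\<^sup>2 + x\<^sup>2)))"
        unfolding cd_def d by simp
      also have "\<dots> = cd 1 x" unfolding cd_def using t by simp
      finally have "cd 1 x = \<theta> * cd \<theta> (\<theta> * x)" ..
      then show "ennreal (cd 1 x) * indicator A (\<theta> * x) = ennreal \<theta> * (ennreal (cd \<theta> (0 + \<theta> * x)) * indicator A (0 + \<theta> * x))"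
        using t by (simp add: ennreal_mult cd_nonneg mult.assoc)
    qed
    also have "\<dots> = ennreal \<theta> * (\<integral>\<^sup>+x. ennreal (cd \<theta> (0 + \<theta> * x)) * indicator A (0 + \<theta> * x) \<partial>lborel)"
      unfolding cd_def by (rule nn_integral_cmult) measurable
    also have "\<dots> = (\<integral>\<^sup>+x. ennreal (cd \<theta> x) * indicator A x \<partial>lborel)"
      using t unfolding cd_def by (subst nn_integral_real_affine[where c=\<theta> and t=0]) auto
    also have "\<dots> = emeasure (K \<theta>) A"
    proof -
      have kt: "K \<theta> = density lborel (\<lambda>x. ennreal (cd \<theta> x))" using False by (simp add: K_def)
      show ?thesis unfolding kt by (subst emeasure_density) (auto simp: cd_def)
    qed
    finally show "emeasure (distr (K 1) borel (\<lambda>x. \<theta> * x)) A = emeasure (K \<theta>) A" .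
  qed
qed

lemma return0_conv:
  assumes "finite_measure M" and [measurable_cong, simp]: "sets M = sets borel"
  shows "(return borel (0::real)) \<star> M = M"
proof (rule measure_eqI)
  show "sets (return borel 0 \<star> M) = sets M" by simp
  fix A assume "A \<in> sets (return borel 0 \<star> M)"
  then have [measurable]: "A \<in> sets borel" by simp
  interpret Mf: finite_measure M by fact
  interpret R: prob_space "return borel (0::real)" by (rule prob_space_return) simp
  have fr: "finite_measure (return borel (0::real))" by (rule finite_measureI) (simp add: R.emeasure_space_1)
  have "emeasure (return borel 0 \<star> M) A = \<integral>\<^sup>+x. \<integral>\<^sup>+y. indicator A (x + y) \<partial>M \<partial>return borel 0"
    using assms by (intro convolution_emeasure') (auto intro!: fr)
  also have "\<dots> = \<integral>\<^sup>+y. indicator A (0 + y) \<partial>M"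
    by (subst nn_integral_return) auto
  also have "\<dots> = emeasure M A" by simp
  finally show "emeasure (return borel 0 \<star> M) A = emeasure M A" .
qed

lemma conv_K:
  assumes a: "a \<ge> 0" and b: "b \<ge> 0"
  shows "K a \<star> K b = K (a + b)"
proof -
  interpret A: prob_space "K a" using prob_K[OF a] .
  interpret B: prob_space "K b" using prob_K[OF b] .
  have fa: "finite_measure (K a)" "finite_measure (K b)" by unfold_locales
  show ?thesis
  proof (cases "a = 0 \<or> b = 0")
    case True
    then show ?thesis
    proof
      assume "a = 0"
      then show ?thesis using return0_conv[OF fa(2)] unfolding K_def[of a] by simp
    next
      assume "b = 0"
      then show ?thesis using return0_conv[OF fa(1)] convolution_commutative[OF fa]
        unfolding K_def[of b] by simp
    qed
  next
    case False
    then have a': "a > 0" and b': "b > 0" using a b by auto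
    have "K a \<star> K b = density lborel (\<lambda>x. \<integral>\<^sup>+y. ennreal (cd a (x - y)) * ennreal (cd b y) \<partial>lborel)"
    proof -
      have ka: "K a = density lborel (\<lambda>x. ennreal (cd a x))" and kb: "K b = density lborel (\<lambda>x. ennreal (cd b x))"
        using a' b' by (auto simp: K_def)
      show ?thesis using fa unfolding ka kb by (intro convolution_density) (auto simp: cd_def)
    qed
    also have "\<dots> = density lborel (\<lambda>x. ennreal (cd (a+b) x))"
    proof (rule density_cong)
      show "(\<lambda>x. \<integral>\<^sup>+y. ennreal (cd a (x - y)) * ennreal (cd b y) \<partial>lborel) \<in> borel_measurable lborel"
        unfolding cd_def by measurable
      show "(\<lambda>x. ennreal (cd (a+b) x)) \<in> borel_measurable lborel" unfolding cd_def by measurable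
      show "AE x in lborel. (\<integral>\<^sup>+y. ennreal (cd a (x - y)) * ennreal (cd b y) \<partial>lborel) = ennreal (cd (a+b) x)"
        using AE_lborel_singleton[of 0]
      proof eventually_elim
        case (elim x)
        have "(\<integral>\<^sup>+y. ennreal (cd a (x - y)) * ennreal (cd b y) \<partial>lborel) = (\<integral>\<^sup>+y. ennreal (cd a (x - y) * cd b y) \<partial>lborel)"
          using a b by (intro nn_integral_cong) (simp add: ennreal_mult cd_nonneg)
        also have "\<dots> = ennreal (cd (a+b) x)" using cd_conv[OF a' b' elim] .
        finally show ?case .
      qed
    qed
    also have "\<dots> = K (a+b)" unfolding K_def using a' b' by simp
    finally show ?thesis .
  qed
qed



lemma sum_law:
  fixes n :: nat
  shows "\<forall>\<theta>. (\<forall>i<n. 0 \<le> \<theta> i) \<longrightarrow>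
     distr (PiM {..<n} (\<lambda>_. K 1)) borel (\<lambda>x. \<Sum>i<n. \<theta> i * x i) = K (\<Sum>i<n. \<theta> i)"
proof (induction n)
  case 0
  interpret prob_space "PiM {..<0::nat} (\<lambda>_. K 1)"
    by (intro prob_space_PiM prob_K) simp
  have k0: "K 0 = return borel 0" by (simp add: K_def)
  have "distr (PiM {..<0::nat} (\<lambda>_. K 1)) borel (\<lambda>x. 0) = return borel 0" by (rule distr_const) simp
  then show ?case using k0 by simp
next
  case (Suc n)
  show ?case
  proof (intro allI impI)
    fix \<theta> :: "nat \<Rightarrow> real" assume th: "\<forall>i<Suc n. 0 \<le> \<theta> i"
    define P where "P = PiM {..<n} (\<lambda>_. K 1)"
    define S where "S X = (\<Sum>i<n. \<theta> i * X i)" for X :: "nat \<Rightarrow> real"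
    have K1: "prob_space (K 1)" by (rule prob_K) simp
    interpret Pp: prob_space P unfolding P_def by (intro prob_space_PiM prob_K) simp
    have IH: "distr P borel S = K (\<Sum>i<n. \<theta> i)"
      using Suc.IH th unfolding P_def S_def by auto
    have Snn: "0 \<le> (\<Sum>i<n. \<theta> i)" using th by (intro sum_nonneg) auto
    have thn: "0 \<le> \<theta> n" using th by auto
    have [measurable]: "S \<in> borel_measurable P" unfolding S_def P_def by measurable
    have upd[measurable]: "(\<lambda>(x, X). X(n := x)) \<in> measurable (K 1 \<Otimes>\<^sub>M P) (PiM (insert n {..<n}) (\<lambda>_. K 1))"
    proof -
      have "(\<lambda>p. (snd p)(n := fst p)) \<in> measurable (K 1 \<Otimes>\<^sub>M P) (PiM ({..<n} \<union> {n}) (\<lambda>_. K 1))"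
        by (rule measurable_fun_upd[where J="{..<n}"]) (auto simp: P_def)
      then show ?thesis by (simp add: case_prod_beta')
    qed
    have eqP: "PiM {..<Suc n} (\<lambda>_. K 1) = distr (K 1 \<Otimes>\<^sub>M P) (PiM (insert n {..<n}) (\<lambda>_. K 1)) (\<lambda>(x, X). X(n := x))"
      unfolding P_def lessThan_Suc using distr_pair_PiM_eq_PiM[of "{..<n}" "\<lambda>_. K 1" n] K1 by simp
    have "distr (PiM {..<Suc n} (\<lambda>_. K 1)) borel (\<lambda>x. \<Sum>i<Suc n. \<theta> i * x i)
        = distr (K 1 \<Otimes>\<^sub>M P) borel ((\<lambda>x. \<Sum>i<Suc n. \<theta> i * x i) \<circ> (\<lambda>(x, X). X(n := x)))"
      unfolding eqP by (rule distr_distr) (auto simp: lessThan_Suc)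
    also have "\<dots> = distr (K 1 \<Otimes>\<^sub>M P) borel (\<lambda>(x, X). \<theta> n * x + S X)"
      by (intro distr_cong) (auto simp: S_def)
    also have "\<dots> = distr (distr (K 1 \<Otimes>\<^sub>M P) (borel \<Otimes>\<^sub>M borel) (\<lambda>(x, X). (\<theta> n * x, S X))) borel (\<lambda>(u, v). u + v)"
      by (subst distr_distr) (auto simp: comp_def case_prod_beta')
    also have "\<dots> = distr (distr (K 1) borel (\<lambda>x. \<theta> n * x) \<Otimes>\<^sub>M distr P borel S) borel (\<lambda>(u, v). u + v)"
    proof -
      have "sigma_finite_measure (distr P borel S)"
        unfolding IH using prob_K[OF Snn] by (simp add: prob_space_imp_sigma_finite)
      then show ?thesis by (subst pair_measure_distr) auto
    qed
    also have "\<dots> = (K (\<theta> n) \<star> K (\<Sum>i<n. \<theta> i))"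
      unfolding IH distr_scale[OF thn] convolution_def ..
    also have "\<dots> = K (\<Sum>i<Suc n. \<theta> i)"
      using conv_K[OF thn Snn] by (simp add: add.commute)
    finally show "distr (PiM {..<Suc n} (\<lambda>_. K 1)) borel (\<lambda>x. \<Sum>i<Suc n. \<theta> i * x i) = K (\<Sum>i<Suc n. \<theta> i)" .
  qed
qed

theorem theorem6:
  fixes \<phi> :: "real \<Rightarrow> real"
  assumes "convex_on UNIV \<phi>"
  shows "D_minus (distr std_cauchy borel \<phi>)"
proof -
  have "continuous_on UNIV \<phi>" by (rule convex_on_continuous) (auto simp: assms)
  then have [measurable]: "\<phi> \<in> borel_measurable borel" by (rule borel_measurable_continuous_onI)
  interpret C: prob_space "K 1" by (rule prob_K) simp
  have C: "std_cauchy = K 1" by (rule std_cauchy_K1)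
  show ?thesis unfolding D_minus_def C
  proof (intro conjI allI impI)
    show "prob_space (distr (K 1) borel \<phi>)" by (rule C.prob_space_distr) simp
    show "sets (distr (K 1) borel \<phi>) = sets borel" by simp
    fix n :: nat and \<theta> :: "nat \<Rightarrow> real"
    assume "(\<forall>i<n. 0 \<le> \<theta> i) \<and> (\<Sum>i<n. \<theta> i) = 1"
    then have th: "\<And>i. i < n \<Longrightarrow> 0 \<le> \<theta> i" and s1: "(\<Sum>i<n. \<theta> i) = 1" by auto
    have ne: "{..<n} \<noteq> {}" using s1 by auto
    define P where "P = PiM {..<n} (\<lambda>_. K 1)"
    interpret Pp: prob_space P unfolding P_def by (intro prob_space_PiM prob_K) simp
    have law: "distr P borel (\<lambda>x. \<Sum>i<n. \<theta> i * x i) = K 1"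
      using sum_law[of n] th s1 unfolding P_def by auto
    have dd: "distr (K 1) borel \<phi> = distr (K 1) (K 1) \<phi>" by (rule distr_cong) auto
    have pim: "PiM {..<n} (\<lambda>_. distr (K 1) borel \<phi>) = distr P (PiM {..<n} (\<lambda>_. K 1)) (compose {..<n} \<phi>)"
      unfolding P_def dd
      by (rule distr_PiM_finite_prob_space'[symmetric]) (auto intro: prob_K)
    show "st_le (distr (K 1) borel \<phi>) (distr (PiM {..<n} (\<lambda>_. distr (K 1) borel \<phi>)) borel (\<lambda>x. \<Sum>i<n. \<theta> i * x i))"
      unfolding st_le_def
    proof
      fix t :: real
      have cm[measurable]: "compose {..<n} \<phi> \<in> measurable (PiM {..<n} (\<lambda>_. K 1)) (PiM {..<n} (\<lambda>_. K 1))"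
      unfolding compose_def by (intro measurable_restrict) auto
    have r: "measure (distr (PiM {..<n} (\<lambda>_. distr (K 1) borel \<phi>)) borel (\<lambda>x. \<Sum>i<n. \<theta> i * x i)) {..t}
          = measure P {x \<in> space P. (\<Sum>i<n. \<theta> i * \<phi> (x i)) \<le> t}"
        unfolding pim
        by (subst measure_distr; (simp add: P_def)?)+ (auto intro!: arg_cong[where f="measure _"] simp: compose_def measurable_space[OF cm, unfolded compose_def])
      have pre: "\<phi> -` {..t} \<in> sets borel" by (rule measurable_sets_borel[of \<phi> borel]) auto
      have l: "measure (distr (K 1) borel \<phi>) {..t} = measure P {x \<in> space P. \<phi> (\<Sum>i<n. \<theta> i * x i) \<le> t}"
        unfolding law[symmetric] using pre
        by (subst measure_distr; (simp add: P_def)?)+ (auto intro!: arg_cong[where f="measure _"])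
      have "measure P {x \<in> space P. (\<Sum>i<n. \<theta> i * \<phi> (x i)) \<le> t} \<le> measure P {x \<in> space P. \<phi> (\<Sum>i<n. \<theta> i * x i) \<le> t}"
      proof (rule Pp.finite_measure_mono)
        show "{x \<in> space P. \<phi> (\<Sum>i<n. \<theta> i * x i) \<le> t} \<in> sets P" unfolding P_def by measurable
        show "{x \<in> space P. (\<Sum>i<n. \<theta> i * \<phi> (x i)) \<le> t} \<subseteq> {x \<in> space P. \<phi> (\<Sum>i<n. \<theta> i * x i) \<le> t}"
        proof safe
          fix x assume "x \<in> space P" "(\<Sum>i<n. \<theta> i * \<phi> (x i)) \<le> t"
          moreover have "\<phi> (\<Sum>i<n. \<theta> i *\<^sub>R x i) \<le> (\<Sum>i<n. \<theta> i * \<phi> (x i))"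
            using ne th s1 by (intro convex_on_sum[OF _ _ assms]) auto
          ultimately show "\<phi> (\<Sum>i<n. \<theta> i * x i) \<le> t" by simp
        qed
      qed
      then show "measure (distr (PiM {..<n} (\<lambda>_. distr (K 1) borel \<phi>)) borel (\<lambda>x. \<Sum>i<n. \<theta> i * x i)) {..t}
          \<le> measure (distr (K 1) borel \<phi>) {..t}"
        unfolding r l .
    qed
  qed
qed

end
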